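(* Let $\mathscr Q_n$ be a non-singular quadric in $\mathrm{PG}(n,q)$ of projective index $g$ with point-graph $\Gamma$, let $0\le s<g$, and let $\alpha_s$ be an $s$-dimensional subspace contained in $\mathscr Q_n$. Then every vertex of $\mathcal Y_s$ is adjacent in $\Gamma$ to $0$, $\frac12|\mathcal X_s|$ or $|\mathcal X_s|$ vertices of $\mathcal X_s$ if and only if $q=2$.
   Context: A non-singular quadric $\mathscr Q_n$ in $\mathrm{PG}(n,q)$ is the point set of a non-degenerate quadric; its projective index $g$ is the largest dimension of a projective subspace contained in $\mathscr Q_n$. The point-graph $\Gamma$ has vertex set the points of $\mathscr Q_n$, two distinct points adjacent iff the line joining them is contained in $\mathscr Q_n$. A point $X$ of $\mathscr Q_n$ has type (i) if $X\in\alpha_s$; type (ii) if $X\notin\alpha_s$ and the $(s+1)$-space $\langle\alpha_s,X\rangle$ is contained in $\mathscr Q_n$; type (iii) otherwise. $\mathcal X_s$ is the set of type (ii) points and $\mathcal Y_s$ the set of points of type (i) or (iii). *)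

theory Defs
  imports "HOL-Analysis.Analysis"
begin

text \<open>PG(n,q) is modelled on the vector space 'a^'n over a finite field 'a,
  where q = CARD('a) and n + 1 = CARD('n).  A projective subspace of
  (projective) dimension k is a linear subspace of vector dimension k + 1;
  projective points are linear subspaces of dimension 1.\<close>

definition is_quadratic_form :: "('a::field ^'n \<Rightarrow> 'a) \<Rightarrow> bool" where
  "is_quadratic_form Q \<longleftrightarrow>
     (\<exists>c :: 'n \<Rightarrow> 'n \<Rightarrow> 'a. \<forall>x. Q x = (\<Sum>i\<in>UNIV. \<Sum>j\<in>UNIV. c i j * x$i * x$j))"

definition polar_form :: "('a::field ^'n \<Rightarrow> 'a) \<Rightarrow> 'a^'n \<Rightarrow> 'a^'n \<Rightarrow> 'a" where
  "polar_form Q x y = Q (x + y) - Q x - Q y"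

definition nonsingular_qf :: "('a::field ^'n \<Rightarrow> 'a) \<Rightarrow> bool" where
  "nonsingular_qf Q \<longleftrightarrow> is_quadratic_form Q \<and>
     (\<forall>x. (\<forall>y. polar_form Q x y = 0) \<and> Q x = 0 \<longrightarrow> x = 0)"

definition proj_subspace :: "nat \<Rightarrow> ('a::field ^'n) set \<Rightarrow> bool" where
  "proj_subspace k W \<longleftrightarrow> vec.subspace W \<and> vec.dim W = k + 1"

definition proj_points :: "('a::field ^'n) set set" where
  "proj_points = {P. proj_subspace 0 P}"

definition on_quadric :: "('a::field ^'n \<Rightarrow> 'a) \<Rightarrow> ('a ^'n) set \<Rightarrow> bool" where
  "on_quadric Q W \<longleftrightarrow> (\<forall>x\<in>W. Q x = 0)"

definition quadric_points :: "('a::field ^'n \<Rightarrow> 'a) \<Rightarrow> ('a ^'n) set set" where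
  "quadric_points Q = {P \<in> proj_points. on_quadric Q P}"

definition proj_index :: "('a::field ^'n \<Rightarrow> 'a) \<Rightarrow> int" where
  "proj_index Q = (GREATEST k::int. \<exists>W :: ('a^'n) set.
      vec.subspace W \<and> int (vec.dim W) = k + 1 \<and> on_quadric Q W)"

definition qadj :: "('a::field ^'n \<Rightarrow> 'a) \<Rightarrow> ('a ^'n) set \<Rightarrow> ('a ^'n) set \<Rightarrow> bool" where
  "qadj Q P R \<longleftrightarrow> P \<in> quadric_points Q \<and> R \<in> quadric_points Q \<and> P \<noteq> R \<and>
     on_quadric Q (vec.span (P \<union> R))"

definition X_set :: "('a::field ^'n \<Rightarrow> 'a) \<Rightarrow> ('a ^'n) set \<Rightarrow> ('a ^'n) set set" where
  "X_set Q A = {P \<in> quadric_points Q. \<not> P \<subseteq> A \<and> on_quadric Q (vec.span (A \<union> P))}"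

definition Y_set :: "('a::field ^'n \<Rightarrow> 'a) \<Rightarrow> ('a ^'n) set \<Rightarrow> ('a ^'n) set set" where
  "Y_set Q A = quadric_points Q - X_set Q A"

end

theory Submission
  imports Defs
begin


lemma pf_formula:
  assumes "\<forall>x. Q x = (\<Sum>i\<in>UNIV. \<Sum>j\<in>UNIV. c i j * x$i * x$j)"
  shows "polar_form Q x y = (\<Sum>i\<in>UNIV. \<Sum>j\<in>UNIV. c i j * (x$i * y$j + y$i * x$j))"
proof -
  have "polar_form Q x y = (\<Sum>i\<in>UNIV. \<Sum>j\<in>UNIV. c i j * (x+y)$i * (x+y)$j)
     - (\<Sum>i\<in>UNIV. \<Sum>j\<in>UNIV. c i j * x$i * x$j) - (\<Sum>i\<in>UNIV. \<Sum>j\<in>UNIV. c i j * y$i * y$j)"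
    unfolding polar_form_def using assms by metis
  also have "\<dots> = (\<Sum>i\<in>UNIV. \<Sum>j\<in>UNIV. c i j * (x+y)$i * (x+y)$j - c i j * x$i * x$j - c i j * y$i * y$j)"
    by (simp add: sum_subtractf)
  also have "\<dots> = (\<Sum>i\<in>UNIV. \<Sum>j\<in>UNIV. c i j * (x$i * y$j + y$i * x$j))"
    by (simp add: algebra_simps)
  finally show ?thesis .
qed

context
  fixes Q :: "'a::field ^ 'n \<Rightarrow> 'a"
  assumes qf: "is_quadratic_form Q"
begin

lemma pf_add_left: "polar_form Q (x + x') y = polar_form Q x y + polar_form Q x' y"
proof -
  obtain c where c: "\<forall>x. Q x = (\<Sum>i\<in>UNIV. \<Sum>j\<in>UNIV. c i j * x$i * x$j)"
    using qf unfolding is_quadratic_form_def by blast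
  show ?thesis unfolding pf_formula[OF c]
    by (simp add: sum.distrib[symmetric] algebra_simps)
qed

lemma pf_smult_left: "polar_form Q (k *s x) y = k * polar_form Q x y"
proof -
  obtain c where c: "\<forall>x. Q x = (\<Sum>i\<in>UNIV. \<Sum>j\<in>UNIV. c i j * x$i * x$j)"
    using qf unfolding is_quadratic_form_def by blast
  show ?thesis unfolding pf_formula[OF c]
    by (simp add: sum_distrib_left algebra_simps)
qed

lemma pf_sym: "polar_form Q x y = polar_form Q y x"
proof -
  obtain c where c: "\<forall>x. Q x = (\<Sum>i\<in>UNIV. \<Sum>j\<in>UNIV. c i j * x$i * x$j)"
    using qf unfolding is_quadratic_form_def by blast
  show ?thesis unfolding pf_formula[OF c]
    by (simp add: algebra_simps)
qed

lemma qf_smult: "Q (k *s x) = k^2 * Q x"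
proof -
  obtain c where c: "\<forall>x. Q x = (\<Sum>i\<in>UNIV. \<Sum>j\<in>UNIV. c i j * x$i * x$j)"
    using qf unfolding is_quadratic_form_def by blast
  have "Q (k *s x) = (\<Sum>i\<in>UNIV. \<Sum>j\<in>UNIV. c i j * (k *s x)$i * (k *s x)$j)" using c by metis
  also have "\<dots> = k^2 * (\<Sum>i\<in>UNIV. \<Sum>j\<in>UNIV. c i j * x$i * x$j)"
    by (simp add: sum_distrib_left algebra_simps power2_eq_square)
  also have "\<dots> = k^2 * Q x" using c by metis
  finally show ?thesis .
qed

lemma qf_zero: "Q 0 = 0"
  using qf_smult[of 0 0] by simp

lemma pf_self: "polar_form Q x x = 2 * Q x"
proof -
  have "x + x = 2 *s x" by (simp add: vec_eq_iff)
  then show ?thesis unfolding polar_form_def using qf_smult[of 2 x] by (simp add: power2_eq_square)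
qed

lemma qf_add: "Q (x + y) = Q x + Q y + polar_form Q x y"
  unfolding polar_form_def by simp

lemma pf_add_right: "polar_form Q y (x + x') = polar_form Q y x + polar_form Q y x'"
  using pf_add_left pf_sym by metis

lemma pf_smult_right: "polar_form Q y (k *s x) = k * polar_form Q y x"
  using pf_smult_left pf_sym by metis

lemma pf_zero_left[simp]: "polar_form Q 0 y = 0"
  using pf_smult_left[of 0 0 y] by simp

lemma pf_zero_right[simp]: "polar_form Q y 0 = 0"
  using pf_zero_left pf_sym by metis

lemma pf_neg_left: "polar_form Q (- x) y = - polar_form Q x y"
  using pf_smult_left[of "-1" x y] by (simp add: vec.scale_minus_left)

lemma pf_neg_right: "polar_form Q y (- x) = - polar_form Q y x"
  using pf_neg_left pf_sym by metis

lemma pf_diff_left: "polar_form Q (x - x') y = polar_form Q x y - polar_form Q x' y"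
  using pf_add_left[of x "-x'" y] pf_neg_left by simp

lemma pf_diff_right: "polar_form Q y (x - x') = polar_form Q y x - polar_form Q y x'"
  using pf_diff_left pf_sym by metis

lemma ts_pf:
  assumes "vec.subspace W" "on_quadric Q W" "u \<in> W" "v \<in> W"
  shows "polar_form Q u v = 0"
  using assms vec.subspace_add[OF assms(1) assms(3,4)] unfolding on_quadric_def polar_form_def by simp

end



lemma mem_span1: "x \<in> vec.span {p} \<longleftrightarrow> (\<exists>k. x = k *s p)"
  by (auto simp: vec.span_singleton)

lemma span_pt: "(p::'a::field^'n) \<noteq> 0 \<Longrightarrow> vec.span {p} \<in> proj_points"
  unfolding proj_points_def proj_subspace_def
  by (simp add: vec.subspace_span vec.dim_span vec.dim_singleton)

lemma pt_rep:
  assumes "(P::('a::field^'n) set) \<in> proj_points"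
  shows "\<exists>p. p \<noteq> 0 \<and> P = vec.span {p}"
proof -
  have sub: "vec.subspace P" and d: "vec.dim P = 1"
    using assms unfolding proj_points_def proj_subspace_def by auto
  obtain B where B: "B \<subseteq> P" "vec.independent B" "P \<subseteq> vec.span B" "card B = vec.dim P"
    using vec.basis_exists by blast
  have "card B = 1" using B(4) d by simp
  then obtain p where p: "B = {p}" by (rule card_1_singletonE)
  have "p \<noteq> 0" using B(2) p vec.dependent_zero by blast
  moreover have "P = vec.span {p}"
  proof
    show "P \<subseteq> vec.span {p}" using B(3) p by simp
    show "vec.span {p} \<subseteq> P" using vec.span_minimal[of "{p}" P] B(1) p sub by simp
  qed
  ultimately show ?thesis by blast
qed

lemma span1_sub: "vec.subspace A \<Longrightarrow> vec.span {p} \<subseteq> A \<longleftrightarrow> p \<in> A"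
proof
  assume "vec.span {p} \<subseteq> A" then show "p \<in> A" using vec.span_base[of p "{p}"] by blast
next
  assume "vec.subspace A" "p \<in> A" then show "vec.span {p} \<subseteq> A" using vec.span_minimal[of "{p}" A] by simp
qed

lemma span1_scale: "k \<noteq> 0 \<Longrightarrow> vec.span {k *s p} = vec.span {p}"
proof -
  assume k: "k \<noteq> 0"
  show ?thesis unfolding set_eq_iff mem_span1
  proof (intro allI iffI)
    fix x assume "\<exists>c. x = c *s (k *s p)"
    then obtain c where "x = c *s (k *s p)" by blast
    then have "x = (c * k) *s p" by (simp add: vec.scale_scale)
    then show "\<exists>c. x = c *s p" by blast
  next
    fix x assume "\<exists>c. x = c *s p"
    then obtain c where c: "x = c *s p" by blast
    have "(c / k) *s (k *s p) = c *s p" using k by (simp add: vec.scale_scale)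
    then show "\<exists>c. x = c *s (k *s p)" using c by metis
  qed
qed

lemma span1_eq:
  assumes "p \<noteq> 0" "vec.span {p} = vec.span {q}"
  shows "\<exists>k. k \<noteq> 0 \<and> q = k *s p"
proof -
  have "q \<in> vec.span {p}" using assms(2) vec.span_base by blast
  then obtain k where k: "q = k *s p" by (auto simp: mem_span1)
  have "p \<in> vec.span {q}" using assms(2) vec.span_base by (metis singletonI)
  then obtain l where l: "p = l *s q" by (auto simp: mem_span1)
  have "k \<noteq> 0" using k l assms(1) by auto
  then show ?thesis using k by blast
qed

lemma join:
  assumes "vec.subspace A"
  shows "x \<in> vec.span (A \<union> vec.span {p}) \<longleftrightarrow> (\<exists>a\<in>A. \<exists>k. x = a + k *s p)"
proof -
  have spA: "vec.span A = A" using assms vec.span_eq_iff by blast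
  show ?thesis unfolding vec.span_Un vec.span_span
    by (auto simp: mem_span1 spA)
qed

context
  fixes Q :: "'a::field ^ 'n \<Rightarrow> 'a"
  assumes qf: "is_quadratic_form Q"
begin

lemma onq_span1: "on_quadric Q (vec.span {p}) \<longleftrightarrow> Q p = 0"
proof
  assume "on_quadric Q (vec.span {p})"
  then show "Q p = 0" unfolding on_quadric_def using vec.span_base[of p "{p}"] by blast
next
  assume h: "Q p = 0"
  show "on_quadric Q (vec.span {p})" unfolding on_quadric_def
  proof
    fix x assume "x \<in> vec.span {p}"
    then obtain k where "x = k *s p" by (auto simp: mem_span1)
    then show "Q x = 0" using qf_smult[OF qf, of k p] h by simp
  qed
qed

lemma qp_iff: "vec.span {p} \<in> quadric_points Q \<longleftrightarrow> p \<noteq> 0 \<and> Q p = 0"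
proof -
  have "vec.span {0::'a^'n} \<notin> proj_points"
    unfolding proj_points_def proj_subspace_def by (simp add: vec.dim_span vec.dim_singleton)
  then show ?thesis unfolding quadric_points_def using span_pt[of p] onq_span1[of p]
    by (cases "p = 0") auto
qed

lemma onq_join:
  assumes "vec.subspace A" "on_quadric Q A" "Q p = 0"
  shows "on_quadric Q (vec.span (A \<union> vec.span {p})) \<longleftrightarrow> (\<forall>a\<in>A. polar_form Q a p = 0)"
proof -
  have e: "Q (a + k *s p) = k * polar_form Q a p" if "a \<in> A" for a k
    using that assms qf_add[OF qf, of a "k *s p"] qf_smult[OF qf, of k p]
      pf_smult_right[OF qf, of a k p] unfolding on_quadric_def by simp
  show ?thesis
  proof
    assume h: "on_quadric Q (vec.span (A \<union> vec.span {p}))"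
    show "\<forall>a\<in>A. polar_form Q a p = 0"
    proof
      fix a assume a: "a \<in> A"
      have "a + 1 *s p \<in> vec.span (A \<union> vec.span {p})" using join[OF assms(1)] a by blast
      then have "Q (a + 1 *s p) = 0" using h unfolding on_quadric_def by blast
      then show "polar_form Q a p = 0" using e[OF a, of 1] by simp
    qed
  next
    assume h: "\<forall>a\<in>A. polar_form Q a p = 0"
    show "on_quadric Q (vec.span (A \<union> vec.span {p}))"
      unfolding on_quadric_def
    proof
      fix x assume "x \<in> vec.span (A \<union> vec.span {p})"
      then obtain a k where "a \<in> A" "x = a + k *s p" using join[OF assms(1)] by blast
      then show "Q x = 0" using e h by simp
    qed
  qed
qed

lemma X_iff:
  assumes "vec.subspace A" "on_quadric Q A"
  shows "vec.span {p} \<in> X_set Q A \<longleftrightarrow> p \<noteq> 0 \<and> Q p = 0 \<and> p \<notin> A \<and> (\<forall>a\<in>A. polar_form Q a p = 0)"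
  unfolding X_set_def mem_Collect_eq qp_iff span1_sub[OF assms(1)]
  using onq_join[OF assms, of p] by auto

lemma qadj_iff:
  "qadj Q (vec.span {y}) (vec.span {x}) \<longleftrightarrow>
     y \<noteq> 0 \<and> Q y = 0 \<and> x \<noteq> 0 \<and> Q x = 0 \<and> vec.span {y} \<noteq> vec.span {x} \<and> polar_form Q y x = 0"
proof -
  have "on_quadric Q (vec.span (vec.span {y} \<union> vec.span {x})) \<longleftrightarrow> polar_form Q y x = 0"
    if "Q y = 0" "Q x = 0"
  proof -
    have "on_quadric Q (vec.span (vec.span {y} \<union> vec.span {x})) \<longleftrightarrow>
       (\<forall>a\<in>vec.span {y}. polar_form Q a x = 0)"
      using onq_join[of "vec.span {y}" x] that onq_span1 vec.subspace_span by blast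
    also have "\<dots> \<longleftrightarrow> polar_form Q y x = 0"
    proof
      assume "\<forall>a\<in>vec.span {y}. polar_form Q a x = 0"
      then show "polar_form Q y x = 0" using vec.span_base[of y "{y}"] by blast
    next
      assume "polar_form Q y x = 0"
      then show "\<forall>a\<in>vec.span {y}. polar_form Q a x = 0"
        using pf_smult_left[OF qf] by (auto simp: mem_span1)
    qed
    finally show ?thesis .
  qed
  then show ?thesis unfolding qadj_def qp_iff by auto
qed

end



definition rep :: "('a::field^'n) set \<Rightarrow> 'a^'n" where
  "rep X = (SOME x. x \<noteq> 0 \<and> X = vec.span {x})"

lemma rep_prop: "X \<in> proj_points \<Longrightarrow> rep X \<noteq> 0 \<and> X = vec.span {rep X}"
  unfolding rep_def using pt_rep[of X] by (rule someI_ex)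

lemma X_sub_pts: "X \<in> X_set Q A \<Longrightarrow> X \<in> proj_points"
  unfolding X_set_def quadric_points_def by auto

lemma count:
  fixes Q :: "'a::{finite,field} ^ 'n \<Rightarrow> 'a"
  assumes qf: "is_quadratic_form Q"
    and A: "vec.subspace A" "on_quadric Q A"
    and y: "y \<noteq> 0" "Q y = 0"
    and a: "a \<in> A" "polar_form Q a y = 1"
  shows "card (X_set Q A) = CARD('a) * card {X\<in>X_set Q A. qadj Q (vec.span {y}) X}"
proof -
  let ?B = "polar_form Q"
  let ?Adj = "{X\<in>X_set Q A. ?B y (rep X) = 0}"
  have ya: "?B y a = 1" using a pf_sym[OF qf] by metis
  have Aa: "?B a' a = 0" if "a' \<in> A" for a' using ts_pf[OF qf A that a(1)] .
  have Qa: "Q a = 0" using a A unfolding on_quadric_def by blast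
  have Xrep: "rep X \<noteq> 0 \<and> X = vec.span {rep X} \<and> Q (rep X) = 0 \<and> rep X \<notin> A \<and>
      (\<forall>a'\<in>A. ?B a' (rep X) = 0)" if "X \<in> X_set Q A" for X
    using rep_prop[OF X_sub_pts[OF that]] X_iff[OF qf A, of "rep X"] that by auto
  have Ynot: "vec.span {y} \<notin> X_set Q A"
    using X_iff[OF qf A, of y] a by auto
  have adj_eq: "{X\<in>X_set Q A. qadj Q (vec.span {y}) X} = ?Adj"
  proof -
    have "qadj Q (vec.span {y}) X \<longleftrightarrow> ?B y (rep X) = 0" if X: "X \<in> X_set Q A" for X
    proof -
      have "vec.span {y} \<noteq> X" using Ynot X by blast
      then show ?thesis using qadj_iff[OF qf, of y "rep X"] Xrep[OF X] y by auto
    qed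
    then show ?thesis by blast
  qed
  define f where "f = (\<lambda>(X, t). vec.span {rep X + t *s a})"
  have wd: "rep X + t *s a \<noteq> 0 \<and> vec.span {rep X + t *s a} \<in> X_set Q A \<and> ?B y (rep X + t *s a) = t"
    if X: "X \<in> ?Adj" for X t
  proof -
    let ?x = "rep X" let ?v = "?x + t *s a"
    have x: "?x \<noteq> 0" "Q ?x = 0" "?x \<notin> A" "\<forall>a'\<in>A. ?B a' ?x = 0" "?B y ?x = 0"
      using Xrep X by auto
    have vA: "?v \<notin> A"
    proof
      assume "?v \<in> A"
      then have "?v - t *s a \<in> A" using vec.subspace_diff[OF A(1)] vec.subspace_scale[OF A(1) a(1)] by blast
      then show False using x(3) by simp
    qed
    then have v0: "?v \<noteq> 0" using vec.subspace_0[OF A(1)] by auto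
    have "?B ?x a = 0" using x(4) a(1) pf_sym[OF qf] by metis
    then have Qv: "Q ?v = 0"
      using qf_add[OF qf, of ?x "t *s a"] qf_smult[OF qf, of t a] Qa x(2) pf_smult_right[OF qf] by simp
    have Bv: "\<forall>a'\<in>A. ?B a' ?v = 0"
      using x(4) Aa by (simp add: pf_add_right[OF qf] pf_smult_right[OF qf])
    have "?B y ?v = t" using x(5) ya by (simp add: pf_add_right[OF qf] pf_smult_right[OF qf])
    then show ?thesis using X_iff[OF qf A, of ?v] v0 Qv vA Bv by simp
  qed
  have bij: "bij_betw f (?Adj \<times> UNIV) (X_set Q A)"
    unfolding bij_betw_def
  proof (intro conjI)
    show "inj_on f (?Adj \<times> UNIV)"
    proof (rule inj_onI, clarsimp simp: f_def)
      fix X t X' t'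
      assume X: "X \<in> X_set Q A" "?B y (rep X) = 0" and X': "X' \<in> X_set Q A" "?B y (rep X') = 0"
        and eq: "vec.span {rep X + t *s a} = vec.span {rep X' + t' *s a}"
      let ?x = "rep X" let ?x' = "rep X'"
      have w: "rep X + t *s a \<noteq> 0" "?B y (rep X + t *s a) = t" using wd X by auto
      have w': "?B y (rep X' + t' *s a) = t'" using wd X' by auto
      obtain k where k: "k \<noteq> 0" "?x' + t' *s a = k *s (?x + t *s a)"
        using span1_eq[OF w(1) eq] by blast
      have tt: "t' = k * t" using w' k(2) w(2) pf_smult_right[OF qf] by metis
      have "?x' = k *s (?x + t *s a) - t' *s a" using k(2) by (metis add_diff_cancel)
      also have "\<dots> = k *s ?x" using tt by (simp add: vec.scale_right_distrib vec.scale_scale)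
      finally have xx: "?x' = k *s ?x" .
      have "X' = X" using Xrep[OF X(1)] Xrep[OF X'(1)] xx span1_scale[OF k(1)] by metis
      then have "?x = k *s ?x" using xx by simp
      then have "(1 - k) *s ?x = 0" by (simp add: vec.scale_left_diff_distrib)
      then have "1 - k = 0" using Xrep[OF X(1)] vec.scale_eq_0_iff by blast
      then have "k = 1" by simp
      then show "X = X' \<and> t = t'" using tt \<open>X' = X\<close> by simp
    qed
  next
    show "f ` (?Adj \<times> UNIV) = X_set Q A"
    proof
      show "f ` (?Adj \<times> UNIV) \<subseteq> X_set Q A" using wd by (auto simp: f_def)
    next
      show "X_set Q A \<subseteq> f ` (?Adj \<times> UNIV)"
      proof
        fix Z assume Z: "Z \<in> X_set Q A"
        let ?z = "rep Z"
        have z: "?z \<noteq> 0" "Z = vec.span {?z}" "Q ?z = 0" "?z \<notin> A" "\<forall>a'\<in>A. ?B a' ?z = 0"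
          using Xrep[OF Z] by auto
        define c where "c = ?B y ?z"
        define x where "x = ?z - c *s a"
        have xA: "x \<notin> A"
        proof
          assume "x \<in> A"
          then have "x + c *s a \<in> A" using vec.subspace_add[OF A(1)] vec.subspace_scale[OF A(1) a(1)] by blast
          then show False using z(4) by (simp add: x_def)
        qed
        then have x0: "x \<noteq> 0" using vec.subspace_0[OF A(1)] by auto
        have za: "?B ?z a = 0" using z(5) a(1) pf_sym[OF qf] by metis
        have xe: "x = ?z + (- c) *s a" by (simp add: x_def vec.scale_minus_left)
        have Qx: "Q x = 0" unfolding xe
          using qf_add[OF qf, of ?z "(-c) *s a"] qf_smult[OF qf, of "-c" a] Qa z(3) za
            pf_smult_right[OF qf] pf_neg_right[OF qf] by simp
        have Bx: "\<forall>a'\<in>A. ?B a' x = 0"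
          using z(5) Aa by (simp add: x_def pf_diff_right[OF qf] pf_smult_right[OF qf])
        have Byx: "?B y x = 0"
          using ya by (simp add: x_def c_def pf_diff_right[OF qf] pf_smult_right[OF qf])
        have XX: "vec.span {x} \<in> X_set Q A" using X_iff[OF qf A, of x] x0 Qx xA Bx by simp
        let ?X = "vec.span {x}"
        have "?X = vec.span {rep ?X}" using Xrep[OF XX] by simp
        then obtain k where k: "k \<noteq> 0" "rep ?X = k *s x" using span1_eq[OF x0] by blast
        have "?B y (rep ?X) = 0" using k Byx pf_smult_right[OF qf] by simp
        then have XA: "?X \<in> ?Adj" using XX by simp
        have "rep ?X + (k * c) *s a = k *s ?z" using k(2)
          by (simp add: x_def vec.scale_right_diff_distrib vec.scale_scale)
        then have "f (?X, k * c) = vec.span {k *s ?z}" by (simp add: f_def)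
        then have "f (?X, k * c) = Z" using span1_scale[OF k(1), of ?z] z(2) by simp
        then show "Z \<in> f ` (?Adj \<times> UNIV)" using XA by force
      qed
    qed
  qed
  have "card (X_set Q A) = card (?Adj \<times> (UNIV :: 'a set))" using bij_betw_same_card[OF bij] by simp
  also have "\<dots> = card ?Adj * CARD('a)" by (simp add: card_cartesian_product)
  finally show ?thesis using adj_eq by simp
qed




lemma dim_hyp:
  fixes f :: "'a::field^'n \<Rightarrow> 'a"
  assumes add: "\<And>x y. f (x+y) = f x + f y" and sc: "\<And>k x. f (k *s x) = k * f x"
    and S: "vec.subspace S"
  shows "vec.subspace {x\<in>S. f x = 0} \<and> vec.dim S \<le> vec.dim {x\<in>S. f x = 0} + 1"
proof
  have f0: "f 0 = 0" using sc[of 0 0] by simp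
  show sub: "vec.subspace {x\<in>S. f x = 0}"
    unfolding vec.subspace_def using S f0 add sc
    by (auto simp: vec.subspace_0 vec.subspace_add vec.subspace_scale)
  let ?T = "{x\<in>S. f x = 0}"
  show "vec.dim S \<le> vec.dim ?T + 1"
  proof (cases "\<forall>x\<in>S. f x = 0")
    case True
    then have "?T = S" by blast
    then show ?thesis by simp
  next
    case False
    then obtain s0 where s0: "s0 \<in> S" "f s0 \<noteq> 0" by blast
    have "S \<subseteq> vec.span (insert s0 ?T)"
    proof
      fix x assume x: "x \<in> S"
      define c where "c = f x / f s0"
      have e: "x - c *s s0 = x + (- c) *s s0" by (simp add: vec.scale_minus_left)
      have "f (x - c *s s0) = 0" unfolding e add sc using s0(2) by (simp add: c_def)
      moreover have "x - c *s s0 \<in> S" using vec.subspace_diff[OF S x vec.subspace_scale[OF S s0(1)]] .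
      ultimately have "x - c *s s0 \<in> vec.span (insert s0 ?T)" by (simp add: vec.span_base)
      moreover have "c *s s0 \<in> vec.span (insert s0 ?T)" by (simp add: vec.span_base vec.span_scale)
      ultimately have "(x - c *s s0) + c *s s0 \<in> vec.span (insert s0 ?T)" by (rule vec.span_add)
      then show "x \<in> vec.span (insert s0 ?T)" by simp
    qed
    then have "vec.dim S \<le> vec.dim (insert s0 ?T)" by (rule vec.dim_mono)
    also have "\<dots> \<le> vec.dim ?T + 1" by (simp add: vec.dim_insert)
    finally show ?thesis .
  qed
qed

context
  fixes Q :: "'a::field ^ 'n \<Rightarrow> 'a"
  assumes qf: "is_quadratic_form Q"
begin

lemma dim_perp:
  assumes "finite E" "vec.subspace S"
  shows "vec.subspace {x\<in>S. \<forall>e\<in>E. polar_form Q e x = 0} \<and>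
         vec.dim S \<le> vec.dim {x\<in>S. \<forall>e\<in>E. polar_form Q e x = 0} + card E"
  using assms(1)
proof (induction E rule: finite_induct)
  case empty
  then show ?case using assms(2) by simp
next
  case (insert e F)
  let ?SF = "{x\<in>S. \<forall>e\<in>F. polar_form Q e x = 0}"
  have eq: "{x\<in>S. \<forall>e'\<in>insert e F. polar_form Q e' x = 0} = {x\<in>?SF. polar_form Q e x = 0}" by auto
  have h: "vec.subspace {x\<in>?SF. polar_form Q e x = 0} \<and> vec.dim ?SF \<le> vec.dim {x\<in>?SF. polar_form Q e x = 0} + 1"
    by (rule dim_hyp) (use insert.IH pf_add_right[OF qf] pf_smult_right[OF qf] in auto)
  then show ?case unfolding eq using insert by simp
qed

lemma pf_sub_left: "vec.subspace {a. polar_form Q a w = 0}"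
  unfolding vec.subspace_def using pf_add_left[OF qf] pf_smult_left[OF qf] pf_zero_left[OF qf] by simp

lemma exists_w:
  assumes A: "vec.subspace A" "on_quadric Q A"
    and W: "vec.subspace W" "on_quadric Q W" and dW: "vec.dim A < vec.dim W"
  shows "\<exists>w. w \<in> W \<and> w \<notin> A \<and> (\<forall>a\<in>A. polar_form Q a w = 0)"
proof -
  let ?D = "A \<inter> W"
  obtain BD where BD: "BD \<subseteq> ?D" "vec.independent BD" "?D \<subseteq> vec.span BD" "card BD = vec.dim ?D"
    using vec.basis_exists by blast
  obtain BA where BA: "BD \<subseteq> BA" "BA \<subseteq> A" "vec.independent BA" "A \<subseteq> vec.span BA"
    using vec.maximal_independent_subset_extend[of BD A] BD by blast
  have fBA: "finite BA" using BA(3) vec.independent_bound_general by blast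
  have cBA: "card BA = vec.dim A" using vec.basis_card_eq_dim[OF BA(2) BA(4) BA(3)] .
  define E where "E = BA - BD"
  have fE: "finite E" using fBA by (simp add: E_def)
  have cE: "card E = vec.dim A - vec.dim ?D"
    unfolding E_def using card_Diff_subset[OF finite_subset[OF BA(1) fBA] BA(1)] cBA BD(4) by simp
  have dD: "vec.dim ?D \<le> vec.dim A" by (rule vec.dim_subset) blast
  let ?K = "{x\<in>W. \<forall>e\<in>E. polar_form Q e x = 0}"
  have dK: "vec.dim W \<le> vec.dim ?K + card E" using dim_perp[OF fE W(1)] by blast
  have "\<not> ?K \<subseteq> A"
  proof
    assume "?K \<subseteq> A"
    then have "?K \<subseteq> ?D" by blast
    then have "vec.dim ?K \<le> vec.dim ?D" by (rule vec.dim_subset)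
    then show False using dK cE dD dW by linarith
  qed
  then obtain w where w: "w \<in> W" "\<forall>e\<in>E. polar_form Q e w = 0" "w \<notin> A" by blast
  have "\<forall>a\<in>A. polar_form Q a w = 0"
  proof
    fix a assume "a \<in> A"
    then have "a \<in> vec.span BA" using BA(4) by blast
    then show "polar_form Q a w = 0"
    proof (rule vec.span_induct)
      show "vec.subspace {a. polar_form Q a w = 0}" by (rule pf_sub_left)
    next
      fix b assume b: "b \<in> BA"
      show "polar_form Q b w = 0"
      proof (cases "b \<in> BD")
        case True
        then have "b \<in> W" using BD(1) by blast
        then show ?thesis using ts_pf[OF qf W \<open>b \<in> W\<close> w(1)] by simp
      next
        case False
        then show ?thesis using w(2) b by (simp add: E_def)
      qed
    qed
  qed
  then show ?thesis using w by blast
qed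

lemma proj_index_witness:
  "\<exists>W. vec.subspace W \<and> int (vec.dim W) = proj_index Q + 1 \<and> on_quadric Q W"
proof -
  define P where "P = (\<lambda>k::int. \<exists>W :: ('a^'n) set. vec.subspace W \<and> int (vec.dim W) = k + 1 \<and> on_quadric Q W)"
  let ?K = "{k. P k}"
  have sub: "?K \<subseteq> {-1..int CARD('n)}"
  proof
    fix k assume "k \<in> ?K"
    then obtain W :: "('a^'n) set" where "int (vec.dim W) = k + 1" unfolding P_def by blast
    moreover have "vec.dim W \<le> CARD('n)" by (rule dim_subset_UNIV_cart_gen)
    ultimately show "k \<in> {-1..int CARD('n)}" by auto
  qed
  have fin: "finite ?K" using finite_subset[OF sub] by simp
  have "P (-1)" unfolding P_def
    by (rule exI[of _ "{0}"]) (simp add: vec.subspace_single_0 vec.dim_singleton on_quadric_def qf_zero[OF qf])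
  then have ne: "?K \<noteq> {}" by blast
  define m where "m = Max ?K"
  have Pm: "P m" using Max_in[OF fin ne] m_def by simp
  have "Greatest P = m"
    by (rule Greatest_equality) (use Pm in simp, use fin m_def in simp)
  then show ?thesis using Pm unfolding P_def proj_index_def by simp
qed

end

lemma exists_Y:
  fixes Q :: "'a::field ^ 'n \<Rightarrow> 'a"
  assumes ns: "nonsingular_qf Q" and A: "vec.subspace A" "on_quadric Q A" and dA: "vec.dim A \<ge> 1"
  shows "\<exists>y a. y \<noteq> 0 \<and> Q y = 0 \<and> a \<in> A \<and> polar_form Q a y = 1"
proof -
  have qf: "is_quadratic_form Q" using ns unfolding nonsingular_qf_def by blast
  have "\<not> A \<subseteq> {0}"
  proof
    assume "A \<subseteq> {0}" then have "vec.dim A = 0" using vec.dim_eq_0 by blast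
    then show False using dA by linarith
  qed
  then obtain a0 where a0: "a0 \<in> A" "a0 \<noteq> 0" by blast
  have Qa0: "Q a0 = 0" using A a0 unfolding on_quadric_def by blast
  obtain z where z: "polar_form Q a0 z \<noteq> 0"
    using ns a0 Qa0 unfolding nonsingular_qf_def by blast
  define b where "b = polar_form Q a0 z"
  define c where "c = - Q z / b"
  define y where "y = z + c *s a0"
  have "polar_form Q z a0 = b" using pf_sym[OF qf] b_def by metis
  then have Qy: "Q y = 0"
    unfolding y_def using qf_add[OF qf, of z "c *s a0"] qf_smult[OF qf, of c a0] Qa0
      pf_smult_right[OF qf, of z c a0] z by (simp add: c_def b_def)
  have Bay: "polar_form Q a0 y = b"
    unfolding y_def using pf_add_right[OF qf] pf_smult_right[OF qf] pf_self[OF qf, of a0] Qa0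
    by (simp add: b_def)
  have y0: "y \<noteq> 0" using Bay z b_def pf_zero_right[OF qf] by auto
  have "polar_form Q ((1/b) *s a0) y = 1" using Bay pf_smult_left[OF qf] z b_def by simp
  moreover have "(1/b) *s a0 \<in> A" using vec.subspace_scale[OF A(1) a0(1)] .
  ultimately show ?thesis using y0 Qy by blast
qed




theorem lemma4p3:
  fixes Q :: "'a::{finite,field} ^ 'n \<Rightarrow> 'a"
    and A :: "('a ^ 'n) set"
    and s :: nat
  assumes "nonsingular_qf Q"
    and "int s < proj_index Q"
    and "proj_subspace s A"
    and "on_quadric Q A"
  shows "(\<forall>Y\<in>Y_set Q A.
            2 * card {X\<in>X_set Q A. qadj Q Y X} \<in> {0, card (X_set Q A), 2 * card (X_set Q A)})
         \<longleftrightarrow> CARD('a) = 2"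
proof -
  have qf: "is_quadratic_form Q" using assms(1) unfolding nonsingular_qf_def by blast
  have As: "vec.subspace A" and dA: "vec.dim A = s + 1"
    using assms(3) unfolding proj_subspace_def by auto
  note A = As assms(4)
  have q2: "CARD('a) \<ge> 2"
  proof -
    have "card {0::'a, 1} = 2" by simp
    moreover have "card {0::'a, 1} \<le> CARD('a)" by (rule card_mono) auto
    ultimately show ?thesis by simp
  qed
  show ?thesis
  proof
    assume H: "\<forall>Y\<in>Y_set Q A.
            2 * card {X\<in>X_set Q A. qadj Q Y X} \<in> {0, card (X_set Q A), 2 * card (X_set Q A)}"
    obtain y a where ya: "y \<noteq> 0" "Q y = 0" "a \<in> A" "polar_form Q a y = 1"
      using exists_Y[OF assms(1) A] dA by auto
    have YY: "vec.span {y} \<in> Y_set Q A"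
      unfolding Y_set_def using qp_iff[OF qf, of y] X_iff[OF qf A, of y] ya by auto
    define m where "m = card {X\<in>X_set Q A. qadj Q (vec.span {y}) X}"
    have cnt: "card (X_set Q A) = CARD('a) * m"
      unfolding m_def by (rule count[OF qf A ya])
    obtain W where W: "vec.subspace W" "int (vec.dim W) = proj_index Q + 1" "on_quadric Q W"
      using proj_index_witness[OF qf] by blast
    have "vec.dim A < vec.dim W" using W(2) dA assms(2) by linarith
    then obtain w where w: "w \<in> W" "w \<notin> A" "\<forall>a\<in>A. polar_form Q a w = 0"
      using exists_w[OF qf A W(1) W(3)] by blast
    have "w \<noteq> 0" using w(2) vec.subspace_0[OF As] by auto
    moreover have "Q w = 0" using W(3) w(1) unfolding on_quadric_def by blast
    ultimately have "vec.span {w} \<in> X_set Q A" using X_iff[OF qf A, of w] w by simp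
    moreover have "finite (X_set Q A)" by simp
    ultimately have "card (X_set Q A) > 0" using card_gt_0_iff by blast
    then have m0: "m > 0" using cnt by simp
    have "2 * m \<in> {0, CARD('a) * m, 2 * (CARD('a) * m)}" using H YY unfolding m_def cnt by blast
    then show "CARD('a) = 2" using m0 q2 by auto
  next
    assume q: "CARD('a) = 2"
    show "\<forall>Y\<in>Y_set Q A.
            2 * card {X\<in>X_set Q A. qadj Q Y X} \<in> {0, card (X_set Q A), 2 * card (X_set Q A)}"
    proof
      fix Y assume Y: "Y \<in> Y_set Q A"
      then have Yq: "Y \<in> quadric_points Q" and YX: "Y \<notin> X_set Q A" unfolding Y_set_def by auto
      then obtain y where y: "y \<noteq> 0" "Y = vec.span {y}"
        using pt_rep unfolding quadric_points_def by blast
      have Qy: "Q y = 0" using Yq y qp_iff[OF qf] by blast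
      show "2 * card {X\<in>X_set Q A. qadj Q Y X} \<in> {0, card (X_set Q A), 2 * card (X_set Q A)}"
      proof (cases "y \<in> A")
        case True
        have "{X\<in>X_set Q A. qadj Q Y X} = X_set Q A"
        proof -
          have "qadj Q Y X" if X: "X \<in> X_set Q A" for X
          proof -
            have r: "rep X \<noteq> 0" "X = vec.span {rep X}" using rep_prop[OF X_sub_pts[OF X]] by auto
            have x: "Q (rep X) = 0" "rep X \<notin> A" "\<forall>a\<in>A. polar_form Q a (rep X) = 0"
              using X_iff[OF qf A, of "rep X"] X r by auto
            have "rep X \<in> vec.span {rep X}" by (simp add: vec.span_base)
            moreover have "vec.span {y} \<subseteq> A" using span1_sub[OF As] True by blast
            ultimately have "vec.span {y} \<noteq> vec.span {rep X}" using x(2) by blast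
            then show ?thesis using qadj_iff[OF qf, of y "rep X"] y Qy r x True by auto
          qed
          then show ?thesis by blast
        qed
        then show ?thesis by simp
      next
        case False
        then obtain a where a: "a \<in> A" "polar_form Q a y \<noteq> 0"
          using YX y X_iff[OF qf A, of y] Qy by auto
        define a' where "a' = (1 / polar_form Q a y) *s a"
        have a': "a' \<in> A" "polar_form Q a' y = 1"
          using a vec.subspace_scale[OF As] pf_smult_left[OF qf] by (auto simp: a'_def)
        have "card (X_set Q A) = 2 * card {X\<in>X_set Q A. qadj Q Y X}"
          using count[OF qf A y(1) Qy a'] q y(2) by simp
        then show ?thesis by simp
      qed
    qed
  qed
qed


end
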